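(* Let $S=\{p_1,\dots,p_n\}$ be a set of $n$ distinct primes. The spectrum of $\mathbf{U}_S$ on $\mathcal{H}^n$ is the set \[\{p_1^{k_1}\cdots p_n^{k_n}\,:\,k_j\in\mathbb{N}=\{0,1,2,\dots\}\text{ for every }j\},\] and each eigenvalue has multiplicity $1$.
   Context: For a power series $f(x)=\sum_{n\ge0}a_nx^n$ and a positive integer $q$, $U_qf(x)=\sum_{n\ge0}a_{qn}x^n$. For $k\in\mathbb{N}$ let $\phi_k(x)=(x\frac{d}{dx})^k\big(\frac{1}{1-x}\big)$, and let $\mathcal{V}$ be the complex span of $\phi_0,\phi_1,\dots$. Let $\mathcal{H}^n=\mathcal{V}\otimes\cdots\otimes\mathcal{V}$ ($n$ factors), where $f_1\otimes\cdots\otimes f_n$ is identified with the function $f_1(x_1)\cdots f_n(x_n)$. The operator $\mathbf{U}_S=U_{p_1}\otimes\cdots\otimes U_{p_n}$ is defined by $\mathbf{U}_S(f_1\otimes\cdots\otimes f_n)(x_1,\dots,x_n)=(U_{p_1}f_1)(x_1)\cdots(U_{p_n}f_n)(x_n)$, extended linearly. The spectrum is the set of $\lambda$ with $\mathbf{U}_SF=\lambda F$ for some nonzero $F\in\mathcal{H}^n$; the multiplicity of $\lambda$ is the dimension of its eigenspace. *)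

theory Defs
  imports "HOL-Computational_Algebra.Computational_Algebra"
begin

definition xD :: "complex fps \<Rightarrow> complex fps" where
  "xD f = fps_X * fps_deriv f"

definition phi :: "nat \<Rightarrow> complex fps" where
  "phi k = (xD ^^ k) (inverse (1 - fps_X))"

definition U :: "nat \<Rightarrow> complex fps \<Rightarrow> complex fps" where
  "U q f = Abs_fps (\<lambda>n. f $ (q * n))"

text \<open>A power series in the variables x_j (j ranging over the finite index type 'n)
  is represented by its coefficient function on multi-indices 'n => nat.
  The elementary tensor f_1 (x) ... (x) f_n is the product f_1(x_1)...f_n(x_n).\<close>

definition tensor :: "('n \<Rightarrow> complex fps) \<Rightarrow> (('n::finite \<Rightarrow> nat) \<Rightarrow> complex)" where
  "tensor fs = (\<lambda>m. \<Prod>j\<in>UNIV. fs j $ m j)"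

definition cspan :: "(('n \<Rightarrow> nat) \<Rightarrow> complex) set \<Rightarrow> (('n \<Rightarrow> nat) \<Rightarrow> complex) set" where
  "cspan B = {F. \<exists>K c. finite K \<and> K \<subseteq> B \<and> F = (\<lambda>m. \<Sum>v\<in>K. c v * v m)}"

definition Hn :: "(('n::finite \<Rightarrow> nat) \<Rightarrow> complex) set" where
  "Hn = cspan {tensor (\<lambda>j. phi (k j)) | k. True}"

text \<open>U_S = U_{p_1} (x) ... (x) U_{p_n}, acting on coefficients; on elementary tensors it
  is tensor (\<lambda>j. U (p j) (fs j)), and it is the linear extension of that.\<close>
definition US :: "('n::finite \<Rightarrow> nat) \<Rightarrow> (('n \<Rightarrow> nat) \<Rightarrow> complex) \<Rightarrow> (('n \<Rightarrow> nat) \<Rightarrow> complex)" where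
  "US p F = (\<lambda>m. F (\<lambda>j. p j * m j))"

definition eigenspace :: "('n::finite \<Rightarrow> nat) \<Rightarrow> complex \<Rightarrow> (('n \<Rightarrow> nat) \<Rightarrow> complex) set" where
  "eigenspace p mu = {F \<in> Hn. US p F = (\<lambda>m. mu * F m)}"

definition spectrum_US :: "('n::finite \<Rightarrow> nat) \<Rightarrow> complex set" where
  "spectrum_US p = {mu. \<exists>F \<in> eigenspace p mu. F \<noteq> (\<lambda>_. 0)}"

lemma US_tensor: "US p (tensor fs) = tensor (\<lambda>j. U (p j) (fs j))"
  by (simp add: US_def tensor_def U_def)

end

theory Submission
  imports Defs
begin

lemma xD_nth: "xD f $ n = of_nat n * f $ n"
  by (cases n) (simp_all add: xD_def)

lemma inv_nth: "inverse (1 - fps_X :: complex fps) $ n = 1"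
proof -
  have "inverse (1 - fps_X :: complex fps) = Abs_fps (\<lambda>_. 1)"
  proof -
    have "inverse (1 - fps_X :: complex fps) = inverse (inverse (Abs_fps (\<lambda>_. 1::complex)))"
      using fps_inverse_gp'[where ?'a = complex] by simp
    also have "\<dots> = Abs_fps (\<lambda>_. 1)" by (rule fps_inverse_idempotent) simp
    finally show ?thesis .
  qed
  then show ?thesis by simp
qed

lemma phi_nth: "phi k $ n = of_nat n ^ k"
  by (induction k) (simp_all add: phi_def xD_nth inv_nth)

definition mon :: "('n::finite \<Rightarrow> nat) \<Rightarrow> ('n \<Rightarrow> nat) \<Rightarrow> complex" where
  "mon k = (\<lambda>m. \<Prod>j\<in>UNIV. of_nat (m j) ^ k j)"

definition lam :: "('n::finite \<Rightarrow> nat) \<Rightarrow> ('n \<Rightarrow> nat) \<Rightarrow> complex" where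
  "lam p k = of_nat (\<Prod>j\<in>UNIV. p j ^ k j)"

lemma tensor_phi: "tensor (\<lambda>j. phi (k j)) = mon k"
  by (simp add: tensor_def mon_def phi_nth)

lemma mono_one: "mon k (\<lambda>_. 1) = 1"
  by (simp add: mon_def)

lemma mono_one' [simp]: "mon k (\<lambda>_. Suc 0) = 1"
  by (simp add: mon_def)

lemma mon_scale: "mon k (\<lambda>j. p j * m j) = lam p k * mon k m"
  by (simp add: mon_def lam_def power_mult_distrib prod.distrib)

lemma US_mono: "US p (mon k) = (\<lambda>m. lam p k * mon k m)"
  by (simp add: US_def mon_def lam_def power_mult_distrib prod.distrib)

lemma lam_inj:
  fixes p :: "'n::finite \<Rightarrow> nat"
  assumes "inj p" and pr: "\<And>j. prime (p j)" and eq: "lam p k = lam p k'"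
  shows "k = k'"
proof
  fix i
  have e: "(\<Prod>j\<in>UNIV. p j ^ k j) = (\<Prod>j\<in>UNIV. p j ^ k' j)"
    using eq unfolding lam_def by (metis of_nat_eq_iff)
  have m: "multiplicity (p i) (\<Prod>j\<in>UNIV. p j ^ kk j) = kk i" for kk
  proof -
    have nz: "0 \<notin> (\<lambda>j. p j ^ kk j) ` UNIV"
    proof -
      have "p j > 0" for j using pr[of j] prime_gt_0_nat by blast
      then show ?thesis by (auto simp: image_iff)
    qed
    have "multiplicity (p i) (\<Prod>j\<in>UNIV. p j ^ kk j) = (\<Sum>j\<in>UNIV. multiplicity (p i) (p j ^ kk j))"
      by (rule prime_elem_multiplicity_prod_distrib) (use pr nz in auto)
    also have "\<dots> = (\<Sum>j\<in>UNIV. if j = i then kk i else 0)"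
    proof (rule sum.cong)
      fix j
      show "multiplicity (p i) (p j ^ kk j) = (if j = i then kk i else 0)"
      proof (cases "j = i")
        case True then show ?thesis using pr[of i] by simp
      next
        case False
        then have "p i \<noteq> p j" using assms(1) by (metis injD)
        then show ?thesis using False pr[of i] pr[of j] multiplicity_distinct_prime_power by simp
      qed
    qed simp
    also have "\<dots> = kk i" by simp
    finally show ?thesis .
  qed
  show "k i = k' i" using m[of k] m[of k'] e by simp
qed

lemma indep:
  fixes p :: "'n::finite \<Rightarrow> nat"
  assumes "inj p" and pr: "\<And>j. prime (p j)"
  shows "finite (K :: ('n \<Rightarrow> nat) set) \<Longrightarrow> (\<And>m. (\<Sum>k\<in>K. c k * mon k m) = 0) \<Longrightarrow> k \<in> K \<Longrightarrow> c k = 0"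
proof (induction K arbitrary: c k rule: finite_induct)
  case empty then show ?case by simp
next
  case (insert k0 K)
  have h0: "c k0 * mon k0 m + (\<Sum>k\<in>K. c k * mon k m) = 0" for m
    using insert(1,2,4) by simp
  have h1: "c k0 * (lam p k0 * mon k0 m) + (\<Sum>k\<in>K. c k * (lam p k * mon k m)) = 0" for m
    using h0[of "\<lambda>j. p j * m j"] by (simp add: mon_scale)
  have "(\<Sum>k\<in>K. (c k * (lam p k - lam p k0)) * mon k m) = 0" for m
  proof -
    have "(\<Sum>k\<in>K. (c k * (lam p k - lam p k0)) * mon k m)
        = (\<Sum>k\<in>K. c k * (lam p k * mon k m)) - lam p k0 * (\<Sum>k\<in>K. c k * mon k m)"
      by (simp add: sum_subtractf sum_distrib_left algebra_simps)
    also have "\<dots> = 0"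
    proof -
      have s: "(\<Sum>k\<in>K. c k * mon k m) = - (c k0 * mon k0 m)"
        using h0[of m] by (metis add.commute eq_neg_iff_add_eq_0)
      have t: "(\<Sum>k\<in>K. c k * (lam p k * mon k m)) = - (c k0 * (lam p k0 * mon k0 m))"
        using h1[of m] by (metis add.commute eq_neg_iff_add_eq_0)
      show ?thesis unfolding s t by (simp add: algebra_simps)
    qed
    finally show ?thesis .
  qed
  then have z: "c k * (lam p k - lam p k0) = 0" if "k \<in> K" for k
    using insert.IH[of "\<lambda>k. c k * (lam p k - lam p k0)"] that by blast
  have zK: "c k = 0" if "k \<in> K" for k
  proof -
    have "k \<noteq> k0" using that insert(2) by auto
    then have "lam p k \<noteq> lam p k0" using lam_inj[OF assms] by blast
    then show ?thesis using z[OF that] by simp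
  qed
  have "c k0 = 0" using h0[of "\<lambda>_. 1"] zK by (simp add: mono_one)
  then show ?case using zK insert(5) by auto
qed

lemma mono_inj:
  fixes p :: "'n::finite \<Rightarrow> nat"
  assumes "inj p" and pr: "\<And>j. prime (p j)"
  shows "inj (mon :: ('n \<Rightarrow> nat) \<Rightarrow> _)"
proof (rule injI)
  fix k k' :: "'n \<Rightarrow> nat" assume "mon k = mon k'"
  then have "US p (mon k) = US p (mon k')" by simp
  then have "US p (mon k) (\<lambda>_. 1) = US p (mon k') (\<lambda>_. 1)" by simp
  then have "lam p k = lam p k'" by (simp add: US_mono)
  then show "k = k'" using lam_inj[OF assms] by blast
qed

lemma Hn_repr:
  fixes p :: "'n::finite \<Rightarrow> nat"
  assumes "inj p" and pr: "\<And>j. prime (p j)" and F: "F \<in> (Hn :: (('n \<Rightarrow> nat) \<Rightarrow> complex) set)"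
  shows "\<exists>K c. finite K \<and> F = (\<lambda>m. \<Sum>k\<in>K. c k * mon k m)"
proof -
  obtain V c where V: "finite V" "V \<subseteq> {tensor (\<lambda>j. phi (k j)) | k. True}"
    and Fd: "F = (\<lambda>m. \<Sum>v\<in>V. c v * v m)"
  proof -
    have "\<exists>V c. finite V \<and> V \<subseteq> {tensor (\<lambda>j. phi (k j)) | k. True} \<and> F = (\<lambda>m. \<Sum>v\<in>V. c v * v m)"
      using F unfolding Hn_def cspan_def by simp
    then show ?thesis using that by blast
  qed
  have inj: "inj (mon :: ('n \<Rightarrow> nat) \<Rightarrow> _)" by (rule mono_inj[OF assms(1,2)])
  define K where "K = mon -` V"
  have fK: "finite K" unfolding K_def using V(1) inj by (simp add: finite_vimageI)
  have "V \<subseteq> range mon" using V(2) unfolding tensor_phi by blast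
  then have VK: "V = mon ` K" unfolding K_def image_vimage_eq by blast
  have r: "(\<Sum>v\<in>mon ` K. c v * v m) = (\<Sum>k\<in>K. c (mon k) * mon k m)" for m
    using sum.reindex[OF inj_on_subset[OF inj subset_UNIV], of "\<lambda>v. c v * v m" K]
    by (simp only: comp_def)
  have "F = (\<lambda>m. \<Sum>k\<in>K. c (mon k) * mon k m)"
    using Fd VK r by simp
  then show ?thesis using fK by (intro exI[of _ K] exI[of _ "\<lambda>k. c (mon k)"]) simp
qed

lemma mono_Hn: "mon k \<in> Hn"
proof -
  have a: "{mon k} \<subseteq> {tensor (\<lambda>j. phi (k j)) | k. True}" unfolding tensor_phi by blast
  have b: "mon k = (\<lambda>m. \<Sum>v\<in>{mon k}. (\<lambda>_. 1) v * v m)" by simp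
  show ?thesis unfolding Hn_def cspan_def
    by (rule CollectI, rule exI[of _ "{mon k}"], rule exI[of _ "\<lambda>_. 1"]) (use a b in simp)
qed

lemma mono_eig: "mon k \<in> eigenspace p (lam p k)"
  unfolding eigenspace_def using mono_Hn[of k] US_mono[of p k] by simp

lemma mono_nz: "mon k \<noteq> (\<lambda>_. 0)"
proof
  assume "mon k = (\<lambda>_. 0)"
  then have "mon k (\<lambda>_. 1) = 0" by simp
  then show False by simp
qed

lemma eig_struct:
  fixes p :: "'n::finite \<Rightarrow> nat"
  assumes "inj p" and pr: "\<And>j. prime (p j)" and F: "F \<in> eigenspace p mu"
  shows "\<exists>K c. finite K \<and> F = (\<lambda>m. \<Sum>k\<in>K. c k * mon k m) \<and> (\<forall>k\<in>K. c k * (lam p k - mu) = 0)"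
proof -
  have FH: "F \<in> Hn" and FE: "US p F = (\<lambda>m. mu * F m)" using F unfolding eigenspace_def by auto
  obtain K c where fK: "finite K" and Fd: "F = (\<lambda>m. \<Sum>k\<in>K. c k * mon k m)"
    using Hn_repr[OF assms(1,2) FH] by blast
  have "(\<Sum>k\<in>K. (c k * (lam p k - mu)) * mon k m) = 0" for m
  proof -
    have a: "US p F m = (\<Sum>k\<in>K. c k * (lam p k * mon k m))"
      unfolding Fd US_def by (simp add: mon_scale)
    have "(\<Sum>k\<in>K. (c k * (lam p k - mu)) * mon k m) = US p F m - mu * F m"
      unfolding a by (simp add: Fd sum_subtractf sum_distrib_left algebra_simps)
    also have "\<dots> = 0" using fun_cong[OF FE, of m] by simp
    finally show ?thesis .
  qed
  then have "\<forall>k\<in>K. c k * (lam p k - mu) = 0" using indep[OF assms(1,2) fK, of "\<lambda>k. c k * (lam p k - mu)"] by blast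
  then show ?thesis using fK Fd by (intro exI[of _ K] exI[of _ c]) simp
qed

theorem mainTheorem18:
  fixes p :: "'n::finite \<Rightarrow> nat"
  assumes "inj p" and "\<And>j. prime (p j)"
  shows "spectrum_US p = {of_nat (\<Prod>j\<in>UNIV. p j ^ k j) | k. True} \<and>
         (\<forall>mu \<in> spectrum_US p.
            \<exists>F0 \<in> eigenspace p mu. F0 \<noteq> (\<lambda>_. 0) \<and> (\<forall>F \<in> eigenspace p mu. \<exists>c. F = (\<lambda>m. c * F0 m)))"
proof -
  have one: "\<exists>c. F = (\<lambda>m. c * mon k0 m)" if F: "F \<in> eigenspace p (lam p k0)" for F and k0 :: "'n \<Rightarrow> nat"
  proof -
    obtain K c where fK: "finite K" and Fd: "F = (\<lambda>m. \<Sum>k\<in>K. c k * mon k m)"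
      and z: "\<forall>k\<in>K. c k * (lam p k - lam p k0) = 0"
      using eig_struct[OF assms F] by blast
    have zz: "c k = 0" if "k \<in> K" "k \<noteq> k0" for k
      using z that lam_inj[OF assms, of k k0] by auto
    have "F m = (if k0 \<in> K then c k0 else 0) * mon k0 m" for m
    proof -
      have "F m = (\<Sum>k\<in>K. if k = k0 then c k0 * mon k0 m else 0)"
        unfolding Fd by (rule sum.cong) (auto simp: zz)
      also have "\<dots> = (if k0 \<in> K then c k0 else 0) * mon k0 m"
        using fK by (simp add: sum.delta)
      finally show ?thesis .
    qed
    then show ?thesis by (intro exI[of _ "if k0 \<in> K then c k0 else 0"]) auto
  qed
  have spec: "spectrum_US p = range (lam p)"
  proof
    show "spectrum_US p \<subseteq> range (lam p)"
    proof
      fix mu assume "mu \<in> spectrum_US p"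
      then obtain F where F: "F \<in> eigenspace p mu" and nz: "F \<noteq> (\<lambda>_. 0)"
        unfolding spectrum_US_def by blast
      obtain K c where fK: "finite K" and Fd: "F = (\<lambda>m. \<Sum>k\<in>K. c k * mon k m)"
        and z: "\<forall>k\<in>K. c k * (lam p k - mu) = 0"
        using eig_struct[OF assms F] by blast
      have "\<exists>k\<in>K. c k \<noteq> 0"
      proof (rule ccontr)
        assume "\<not> ?thesis"
        then have "F = (\<lambda>_. 0)" unfolding Fd by auto
        then show False using nz by simp
      qed
      then obtain k where "k \<in> K" "c k \<noteq> 0" by blast
      then have "mu = lam p k" using z by auto
      then show "mu \<in> range (lam p)" by simp
    qed
  next
    show "range (lam p) \<subseteq> spectrum_US p"
      using mono_eig mono_nz unfolding spectrum_US_def by blast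
  qed
  have set: "range (lam p) = {of_nat (\<Prod>j\<in>UNIV. p j ^ k j) | k. True}"
    unfolding lam_def by auto
  show ?thesis
  proof
    show "spectrum_US p = {of_nat (\<Prod>j\<in>UNIV. p j ^ k j) | k. True}" using spec set by simp
  next
    show "\<forall>mu \<in> spectrum_US p.
            \<exists>F0 \<in> eigenspace p mu. F0 \<noteq> (\<lambda>_. 0) \<and> (\<forall>F \<in> eigenspace p mu. \<exists>c. F = (\<lambda>m. c * F0 m))"
      unfolding spec using mono_eig mono_nz one by blast
  qed
qed

end
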